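(* Assume $\alpha\ge(N-1)/(N-2)$, let $1\le k\le N/2$ and let $v\in E_k$. If $k>1$ or if $t(v)<1$, then $v$ is linearly unstable.
   Context: Let $N\ge3$, $\alpha>1$, and $A_{i,j}=1-\delta_{i,j}$ for $i,j\le N$. Let $\Delta=\{v\in\mathbb R_+^N:\sum_iv_i=1,\ v_i\le3/4\ \forall i\}$. For $v$ with nonnegative coordinates let $v^\alpha=(v_i^\alpha)_i$, $H(v)=\sum_{i\neq j}v_i^\alpha v_j^\alpha$, $\pi_i(v)=v_i^\alpha(Av^\alpha)_i/H(v)$, and on $\Delta$ let $F(v)=-v+\pi(v)$. An equilibrium is $v\in\Delta$ with $F(v)=0$. For $1\le k\le N/2$, $E_k$ denotes the set of equilibria $v$ with all coordinates positive, different from the center $(1/N,\dots,1/N)$, and such that $v_1=\dots=v_k$ and $v_{k+1}=\dots=v_N$. For $v\in E_k$, $t(v)=v_N/v_1$. With $DF(v)$ the differential at $v$ of $v\mapsto-v+\pi(v)$ acting on $\{x:\sum_ix_i=0\}$, an equilibrium is linearly unstable if some eigenvalue of $DF(v)$ has positive real part. *)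

theory Defs
  imports "HOL-Analysis.Analysis"
begin

text \<open>Vectors in R^N are functions nat => real, with coordinates indexed by 1..N.\<close>

definition Hfun :: "nat \<Rightarrow> real \<Rightarrow> (nat \<Rightarrow> real) \<Rightarrow> real" where
  "Hfun N \<alpha> v = (\<Sum>i\<in>{1..N}. \<Sum>j\<in>{1..N}-{i}. v i powr \<alpha> * v j powr \<alpha>)"

definition Avalpha :: "nat \<Rightarrow> real \<Rightarrow> (nat \<Rightarrow> real) \<Rightarrow> nat \<Rightarrow> real" where
  "Avalpha N \<alpha> v i = (\<Sum>j\<in>{1..N}. (if i = j then 0 else 1) * v j powr \<alpha>)"

definition pifun :: "nat \<Rightarrow> real \<Rightarrow> (nat \<Rightarrow> real) \<Rightarrow> nat \<Rightarrow> real" where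
  "pifun N \<alpha> v i = v i powr \<alpha> * Avalpha N \<alpha> v i / Hfun N \<alpha> v"

definition Ffun :: "nat \<Rightarrow> real \<Rightarrow> (nat \<Rightarrow> real) \<Rightarrow> nat \<Rightarrow> real" where
  "Ffun N \<alpha> v i = - v i + pifun N \<alpha> v i"

definition in_Delta :: "nat \<Rightarrow> (nat \<Rightarrow> real) \<Rightarrow> bool" where
  "in_Delta N v \<longleftrightarrow> (\<forall>i\<in>{1..N}. 0 \<le> v i \<and> v i \<le> 3/4) \<and> (\<Sum>i\<in>{1..N}. v i) = 1"

definition equilibrium :: "nat \<Rightarrow> real \<Rightarrow> (nat \<Rightarrow> real) \<Rightarrow> bool" where
  "equilibrium N \<alpha> v \<longleftrightarrow> in_Delta N v \<and> (\<forall>i\<in>{1..N}. Ffun N \<alpha> v i = 0)"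

definition E_set :: "nat \<Rightarrow> real \<Rightarrow> nat \<Rightarrow> (nat \<Rightarrow> real) set" where
  "E_set N \<alpha> k = {v. equilibrium N \<alpha> v \<and> (\<forall>i\<in>{1..N}. v i > 0)
      \<and> (\<exists>i\<in>{1..N}. v i \<noteq> 1 / real N)
      \<and> (\<forall>i\<in>{1..k}. v i = v 1) \<and> (\<forall>i\<in>{k+1..N}. v i = v N)}"

definition tval :: "nat \<Rightarrow> (nat \<Rightarrow> real) \<Rightarrow> real" where
  "tval N v = v N / v 1"

definition jac :: "nat \<Rightarrow> real \<Rightarrow> (nat \<Rightarrow> real) \<Rightarrow> nat \<Rightarrow> nat \<Rightarrow> real" where
  "jac N \<alpha> v i j = deriv (\<lambda>s. Ffun N \<alpha> (v(j := v j + s)) i) 0"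

definition linearly_unstable :: "nat \<Rightarrow> real \<Rightarrow> (nat \<Rightarrow> real) \<Rightarrow> bool" where
  "linearly_unstable N \<alpha> v \<longleftrightarrow>
     (\<exists>mu::complex. Re mu > 0 \<and>
        (\<exists>x :: nat \<Rightarrow> complex. (\<exists>i\<in>{1..N}. x i \<noteq> 0) \<and> (\<Sum>i\<in>{1..N}. x i) = 0 \<and>
           (\<forall>i\<in>{1..N}. (\<Sum>j\<in>{1..N}. complex_of_real (jac N \<alpha> v i j) * x j) = mu * x i)))"

end

theory Submission
  imports Defs
begin

lemma g_deriv:
  assumes "v j > 0"
  shows "((\<lambda>s. (v(j := v j + s)) l powr \<alpha>) has_real_derivative
           (if l = j then \<alpha> * (v j powr \<alpha> / v j) else 0)) (at 0)"
proof (cases "l = j")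
  case True
  have "DERIV (\<lambda>s. (v j + s) powr \<alpha>) 0 :> \<alpha> * (v j + 0) powr (\<alpha> - of_nat 1) * 1"
    by (rule DERIV_fun_powr) (auto intro!: derivative_eq_intros assms)
  then show ?thesis using True assms by (simp add: powr_diff)
next
  case False
  then show ?thesis by simp
qed

lemma Aval_eq:
  assumes "i \<in> {1..N}"
  shows "Avalpha N \<alpha> u i = (\<Sum>l\<in>{1..N}. u l powr \<alpha>) - u i powr \<alpha>"
proof -
  have "Avalpha N \<alpha> u i = (\<Sum>l\<in>{1..N}. u l powr \<alpha> - (if l = i then u i powr \<alpha> else 0))"
    unfolding Avalpha_def by (rule sum.cong) auto
  also have "\<dots> = (\<Sum>l\<in>{1..N}. u l powr \<alpha>) - u i powr \<alpha>"
    using assms by (simp add: sum_subtractf)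
  finally show ?thesis .
qed

lemma H_eq:
  "Hfun N \<alpha> u = (\<Sum>l\<in>{1..N}. u l powr \<alpha>)^2 - (\<Sum>l\<in>{1..N}. (u l powr \<alpha>)^2)"
proof -
  have "Hfun N \<alpha> u = (\<Sum>i\<in>{1..N}. u i powr \<alpha> * ((\<Sum>l\<in>{1..N}. u l powr \<alpha>) - u i powr \<alpha>))"
    unfolding Hfun_def
    by (rule sum.cong) (auto simp: sum_distrib_left[symmetric] sum_diff1)
  also have "\<dots> = (\<Sum>l\<in>{1..N}. u l powr \<alpha>)^2 - (\<Sum>l\<in>{1..N}. (u l powr \<alpha>)^2)"
    by (simp add: right_diff_distrib sum_subtractf power2_eq_square sum_distrib_right[symmetric] mult.commute)
  finally show ?thesis .
qed

lemma F_deriv: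
  fixes v :: "nat \<Rightarrow> real" and N i j :: nat and \<alpha> :: real
  assumes pos: "\<forall>l\<in>{1..N}. v l > 0" and j: "j \<in> {1..N}" and i: "i \<in> {1..N}"
    and H: "Hfun N \<alpha> v \<noteq> 0"
  defines "S \<equiv> (\<Sum>l\<in>{1..N}. v l powr \<alpha>)"
  defines "d \<equiv> \<alpha> * (v j powr \<alpha> / v j)"
  defines "gi \<equiv> (if i = j then d else 0)"
  shows "DERIV (\<lambda>s. Ffun N \<alpha> (v(j := v j + s)) i) 0 :>
     - (if i = j then 1 else 0) + ((gi * (S - v i powr \<alpha>) + v i powr \<alpha> * (d - gi)) * Hfun N \<alpha> v
        - v i powr \<alpha> * (S - v i powr \<alpha>) * (2*S*d - 2 * v j powr \<alpha> * d)) / (Hfun N \<alpha> v * Hfun N \<alpha> v)"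
proof -
  define g where "g l s = (v(j := v j + s)) l powr \<alpha>" for l s
  have vj: "v j > 0" using pos j by auto
  have dg: "DERIV (g l) 0 :> (if l = j then d else 0)" for l
    unfolding g_def d_def by (rule g_deriv[of v j, OF vj])
  have g0: "g l 0 = v l powr \<alpha>" for l unfolding g_def by simp
  have dS: "DERIV (\<lambda>s. \<Sum>l\<in>{1..N}. g l s) 0 :> d"
  proof -
    have "DERIV (\<lambda>s. \<Sum>l\<in>{1..N}. g l s) 0 :> (\<Sum>l\<in>{1..N}. if l = j then d else 0)"
      by (rule DERIV_sum) (rule dg)
    then show ?thesis using j by simp
  qed
  have dQ: "DERIV (\<lambda>s. \<Sum>l\<in>{1..N}. (g l s)^2) 0 :> 2 * v j powr \<alpha> * d"
  proof -
    have "DERIV (\<lambda>s. \<Sum>l\<in>{1..N}. (g l s)^2) 0 :> (\<Sum>l\<in>{1..N}. of_nat 2 * ((if l = j then d else 0) * (g l 0)^(2 - Suc 0)))"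
      by (rule DERIV_sum) (rule DERIV_power[OF dg])
    moreover have "(\<Sum>l\<in>{1..N}. of_nat 2 * ((if l = j then d else 0) * (g l 0)^(2 - Suc 0)))
        = (\<Sum>l\<in>{1..N}. if l = j then 2 * v j powr \<alpha> * d else 0)"
      by (rule sum.cong) (auto simp: g0)
    ultimately show ?thesis using j by simp
  qed
  have eqF: "Ffun N \<alpha> (v(j := v j + s)) i = - (v(j := v j + s)) i
     + g i s * ((\<Sum>l\<in>{1..N}. g l s) - g i s) / ((\<Sum>l\<in>{1..N}. g l s)^2 - (\<Sum>l\<in>{1..N}. (g l s)^2))" for s
    unfolding Ffun_def pifun_def Aval_eq[OF i] H_eq g_def by simp
  have du: "DERIV (\<lambda>s. (v(j := v j + s)) i) 0 :> (if i = j then 1 else 0)"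
    by (cases "i = j") (auto intro!: derivative_eq_intros)
  have H0: "(\<Sum>l\<in>{1..N}. g l 0)^2 - (\<Sum>l\<in>{1..N}. (g l 0)^2) = Hfun N \<alpha> v"
    by (simp add: g0 H_eq)
  have "DERIV (\<lambda>s. - (v(j := v j + s)) i
     + g i s * ((\<Sum>l\<in>{1..N}. g l s) - g i s) / ((\<Sum>l\<in>{1..N}. g l s)^2 - (\<Sum>l\<in>{1..N}. (g l s)^2))) 0 :>
     - (if i = j then 1 else 0) + ((gi * (S - v i powr \<alpha>) + v i powr \<alpha> * (d - gi)) * Hfun N \<alpha> v
        - v i powr \<alpha> * (S - v i powr \<alpha>) * (2*S*d - 2 * v j powr \<alpha> * d)) / (Hfun N \<alpha> v * Hfun N \<alpha> v)"
  proof -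
    have dgi: "DERIV (g i) 0 :> gi" using dg[of i] by (simp add: gi_def)
    have dA: "DERIV (\<lambda>s. (\<Sum>l\<in>{1..N}. g l s) - g i s) 0 :> d - gi"
      by (rule DERIV_diff[OF dS dgi])
    have dNum: "DERIV (\<lambda>s. g i s * ((\<Sum>l\<in>{1..N}. g l s) - g i s)) 0 :>
        gi * (S - v i powr \<alpha>) + v i powr \<alpha> * (d - gi)"
      by (rule DERIV_cong[OF DERIV_mult[OF dgi dA]]) (simp add: g0 S_def)
    have dS2: "DERIV (\<lambda>s. (\<Sum>l\<in>{1..N}. g l s)^2) 0 :> 2 * S * d"
      by (rule DERIV_cong[OF DERIV_power[OF dS]]) (simp add: g0 S_def)
    have dDen: "DERIV (\<lambda>s. (\<Sum>l\<in>{1..N}. g l s)^2 - (\<Sum>l\<in>{1..N}. (g l s)^2)) 0 :>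
        2*S*d - 2 * v j powr \<alpha> * d"
      by (rule DERIV_diff[OF dS2 dQ])
    have dQuot: "DERIV (\<lambda>s. g i s * ((\<Sum>l\<in>{1..N}. g l s) - g i s) / ((\<Sum>l\<in>{1..N}. g l s)^2 - (\<Sum>l\<in>{1..N}. (g l s)^2))) 0 :>
      ((gi * (S - v i powr \<alpha>) + v i powr \<alpha> * (d - gi)) * Hfun N \<alpha> v
        - v i powr \<alpha> * (S - v i powr \<alpha>) * (2*S*d - 2 * v j powr \<alpha> * d)) / (Hfun N \<alpha> v * Hfun N \<alpha> v)"
      by (rule DERIV_cong[OF DERIV_divide[OF dNum dDen]]) (use H H0 in \<open>simp_all add: g0 S_def\<close>)
    show ?thesis
      by (rule DERIV_cong[OF DERIV_add[OF DERIV_minus[OF du] dQuot]]) simp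
  qed
  then show ?thesis by (simp add: eqF)
qed

lemma choose_pq:
  fixes N k :: nat and \<alpha> :: real and v :: "nat \<Rightarrow> real"
  assumes "N \<ge> 3" "1 \<le> k" "2 * k \<le> N" "v \<in> E_set N \<alpha> k" "k > 1 \<or> tval N v < 1"
  shows "\<exists>p q. p \<in> {1..N} \<and> q \<in> {1..N} \<and> p \<noteq> q \<and> v p = v q \<and>
     (\<forall>i\<in>{1..N}. v p \<le> v i) \<and> (\<exists>i\<in>{1..N}. v p < v i)"
proof -
  have E: "in_Delta N v" "\<forall>i\<in>{1..N}. v i > 0" "\<exists>i\<in>{1..N}. v i \<noteq> 1 / real N"
     "\<forall>i\<in>{1..k}. v i = v 1" "\<forall>i\<in>{k+1..N}. v i = v N"
    using assms(4) unfolding E_set_def equilibrium_def by blast+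
  have two: "\<forall>i\<in>{1..N}. v i = v 1 \<or> v i = v N"
  proof
    fix i assume "i \<in> {1..N}"
    then have "i \<in> {1..k} \<or> i \<in> {k+1..N}" by auto
    then show "v i = v 1 \<or> v i = v N" using E(4,5) by blast
  qed
  have ne: "v 1 \<noteq> v N"
  proof
    assume h: "v 1 = v N"
    then have all: "\<forall>i\<in>{1..N}. v i = v 1" using two by metis
    have "(\<Sum>i\<in>{1..N}. v i) = (\<Sum>i\<in>{1..N}. v 1)" by (rule sum.cong[OF refl]) (use all in blast)
    then have "real N * v 1 = 1" using E(1) by (simp add: in_Delta_def)
    then have "v 1 = 1 / real N" using assms(1) by (simp add: field_simps)
    then show False using E(3) all by auto
  qed
  have v1: "v 1 > 0" using E(2) assms(1) by auto
  show ?thesis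
  proof (cases "v N < v 1")
    case True
    have k1: "k + 1 \<le> N - 1" using assms(1-3) by presburger
    show ?thesis
    proof (intro exI conjI)
      show "N - 1 \<in> {1..N}" "N \<in> {1..N}" "N - 1 \<noteq> N" using assms(1) by auto
      have "N - 1 \<in> {k+1..N}" using k1 by auto
      then show "v (N-1) = v N" using E(5) by blast
      show "\<forall>i\<in>{1..N}. v (N - 1) \<le> v i" proof
        fix i assume "i \<in> {1..N}"
        then show "v (N - 1) \<le> v i" using two True \<open>v (N-1) = v N\<close> by (metis order.refl less_imp_le)
      qed
      show "\<exists>i\<in>{1..N}. v (N - 1) < v i" using True \<open>v (N-1) = v N\<close> assms(1)
        by (intro bexI[of _ 1]) auto
    qed
  next
    case False
    then have lt: "v 1 < v N" using ne by auto
    have "k > 1"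
    proof (rule ccontr)
      assume "\<not> k > 1"
      then have "tval N v < 1" using assms(5) by auto
      then show False using lt v1 by (simp add: tval_def divide_less_eq)
    qed
    show ?thesis
    proof (intro exI conjI)
      show "1 \<in> {1..N}" "2 \<in> {1..N}" "(1::nat) \<noteq> 2" using assms(1) by auto
      have "2 \<in> {1..k}" using \<open>k > 1\<close> by auto
      then have "v 2 = v 1" using E(4) by blast
      then show "v 1 = v 2" by simp
      show "\<forall>i\<in>{1..N}. v 1 \<le> v i" proof
        fix i assume "i \<in> {1..N}"
        then show "v 1 \<le> v i" using two lt by (metis order.refl less_imp_le)
      qed
      show "\<exists>i\<in>{1..N}. v 1 < v i" using lt assms(1) by (intro bexI[of _ N]) auto
    qed
  qed
qed

theorem lemma4p4:
  fixes N k :: nat and \<alpha> :: real and v :: "nat \<Rightarrow> real"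
  assumes "N \<ge> 3" and "\<alpha> > 1"
    and "\<alpha> \<ge> (real N - 1) / (real N - 2)"
    and "1 \<le> k" and "2 * k \<le> N"
    and "v \<in> E_set N \<alpha> k"
    and "k > 1 \<or> tval N v < 1"
  shows "linearly_unstable N \<alpha> v"
proof -
  obtain p q where pq: "p \<in> {1..N}" "q \<in> {1..N}" "p \<noteq> q" "v p = v q"
     and mn: "\<forall>i\<in>{1..N}. v p \<le> v i" and ex: "\<exists>i\<in>{1..N}. v p < v i"
    using choose_pq[OF assms(1,4,5,6,7)] by blast
  have eq: "equilibrium N \<alpha> v" and pos: "\<forall>l\<in>{1..N}. v l > 0"
    using assms(6) unfolding E_set_def by blast+
  define w where "w l = v l powr \<alpha>" for l
  define S where "S = (\<Sum>l\<in>{1..N}. w l)"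
  define H where "H = Hfun N \<alpha> v"
  define a where "a = w p"
  define d where "d j = \<alpha> * (w j / v j)" for j
  have vp: "v p > 0" using pos pq by auto
  have a0: "a > 0" using vp by (simp add: a_def w_def)
  have wq: "w q = a" using pq by (simp add: a_def w_def)
  have dq: "d q = d p" using pq by (simp add: d_def w_def)
  have wge: "\<forall>l\<in>{1..N}. a \<le> w l"
  proof
    fix l assume "l \<in> {1..N}"
    then have "v p \<le> v l" using mn by blast
    then show "a \<le> w l" unfolding a_def w_def using vp assms(2) by (intro powr_mono2) auto
  qed
  have wgt: "\<exists>l\<in>{1..N}. a < w l"
  proof -
    obtain l where l: "l \<in> {1..N}" "v p < v l" using ex by blast
    then have "a < w l" unfolding a_def w_def using vp assms(2) by (intro powr_less_mono2) auto
    then show ?thesis using l by blast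
  qed
  have SNa: "S > real N * a"
  proof -
    have "(\<Sum>l\<in>{1..N}. a) < (\<Sum>l\<in>{1..N}. w l)"
      by (rule sum_strict_mono_ex1) (use wge wgt in auto)
    then show ?thesis by (simp add: S_def)
  qed
  have Hpos: "H > 0"
  proof -
    have "Hfun N \<alpha> v = (\<Sum>i\<in>{1..N}. \<Sum>j\<in>{1..N}-{i}. v i powr \<alpha> * v j powr \<alpha>)"
      by (simp add: Hfun_def)
    also have "\<dots> > 0"
    proof (rule sum_pos)
      show "finite {1..N}" "{1..N} \<noteq> {}" using assms(1) by auto
      fix i assume i: "i \<in> {1..N}"
      show "(\<Sum>j\<in>{1..N}-{i}. v i powr \<alpha> * v j powr \<alpha>) > 0"
      proof (rule sum_pos)
        show "finite ({1..N}-{i})" by auto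
        have "(if i = 1 then 2 else 1) \<in> {1..N}-{i}" using assms(1) i by auto
        then show "{1..N}-{i} \<noteq> {}" by blast
        fix j assume "j \<in> {1..N}-{i}"
        then have "v i > 0" "v j > 0" using pos i by auto
        then show "v i powr \<alpha> * v j powr \<alpha> > 0" by simp
      qed
    qed
    finally show ?thesis by (simp add: H_def)
  qed
  have Sa: "S - a > 0" using SNa a0 assms(1)
  proof -
    have "real N * a \<ge> 3 * a" using assms(1) a0 by (intro mult_right_mono) auto
    then show ?thesis using SNa a0 by linarith
  qed
  have Fp: "Ffun N \<alpha> v p = 0" using eq pq unfolding equilibrium_def by blast
  have vp_eq: "v p = a * (S - a) / H"
    using Fp unfolding Ffun_def pifun_def Aval_eq[OF pq(1)]
    by (simp add: a_def w_def S_def H_def)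
  have dp: "d p = \<alpha> * H / (S - a)"
  proof -
    have "a / v p = H / (S - a)" using a0 Sa Hpos by (subst vp_eq) (simp add: field_simps)
    then show ?thesis by (simp add: d_def a_def[symmetric])
  qed
  define Jf where "Jf i j = - (if i = j then 1 else 0)
     + (((if i = j then d j else 0) * (S - w i) + w i * (d j - (if i = j then d j else 0))) * H
        - w i * (S - w i) * (2*S*d j - 2 * w j * d j)) / (H * H)" for i j
  have J: "jac N \<alpha> v i j = Jf i j" if "i \<in> {1..N}" "j \<in> {1..N}" for i j
    unfolding jac_def Jf_def H_def S_def w_def d_def
    by (rule DERIV_imp_deriv, rule F_deriv[OF pos that(2) that(1)]) (use Hpos in \<open>simp add: H_def\<close>)
  define mu where "mu = Jf p p - Jf p q"
  have mu_eq: "mu = -1 + d p * (S - 2*a) / H"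
    using pq(3) Hpos unfolding mu_def Jf_def by (simp add: wq dq a_def[symmetric] field_simps)
  have mu_eq2: "mu = -1 + \<alpha> * (S - 2*a) / (S - a)"
    using Hpos Sa by (simp add: mu_eq dp field_simps)
  have key: "\<alpha> * (S - 2*a) > S - a"
  proof -
    have N2: "real N - 2 > 0" using assms(1) by simp
    have "\<alpha> * (real N - 2) \<ge> real N - 1" using assms(3) N2 by (simp add: field_simps)
    then have h2: "a * (\<alpha> * (real N - 2)) \<ge> a * (real N - 1)" using a0 by (intro mult_left_mono) auto
    have h1: "(\<alpha> - 1) * S > (\<alpha> - 1) * (real N * a)" using assms(2) SNa by (intro mult_strict_left_mono) auto
    show ?thesis using h1 h2 by (simp add: algebra_simps)
  qed
  have mupos: "mu > 0"
    using key Sa by (simp add: mu_eq2 less_divide_eq)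
  define x where "x j = (if j = p then 1 else 0) - (if j = q then (1::complex) else 0)" for j
  show ?thesis
    unfolding linearly_unstable_def
  proof (intro exI conjI)
    show "Re (complex_of_real mu) > 0" using mupos by simp
    show "\<exists>i\<in>{1..N}. x i \<noteq> 0" using pq by (intro bexI[of _ p]) (auto simp: x_def)
    show "(\<Sum>i\<in>{1..N}. x i) = 0" using pq by (simp add: x_def sum_subtractf)
    show "\<forall>i\<in>{1..N}. (\<Sum>j\<in>{1..N}. complex_of_real (jac N \<alpha> v i j) * x j) = complex_of_real mu * x i"
    proof
      fix i assume i: "i \<in> {1..N}"
      have "(\<Sum>j\<in>{1..N}. complex_of_real (jac N \<alpha> v i j) * x j)
          = (\<Sum>j\<in>{1..N}. (if j = p then complex_of_real (jac N \<alpha> v i p) else 0)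
                         - (if j = q then complex_of_real (jac N \<alpha> v i q) else 0))"
        by (rule sum.cong[OF refl]) (simp add: x_def right_diff_distrib)
      also have "\<dots> = complex_of_real (Jf i p - Jf i q)"
        using pq i by (simp add: sum_subtractf J)
      also have "\<dots> = complex_of_real mu * x i"
      proof -
        consider "i = p" | "i = q" | "i \<noteq> p" "i \<noteq> q" by blast
        then show ?thesis
        proof cases
          case 1 then show ?thesis using pq(3) by (simp add: x_def mu_def)
        next
          case 2
          have "Jf q p - Jf q q = - mu"
            using pq(3) unfolding mu_def Jf_def by (simp add: wq dq a_def[symmetric] field_simps)
          then show ?thesis using 2 pq(3) by (simp add: x_def)
        next
          case 3
          have "Jf i p = Jf i q" using 3 unfolding Jf_def by (simp add: wq dq a_def[symmetric])
          then show ?thesis using 3 by (simp add: x_def)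
        qed
      qed
      finally show "(\<Sum>j\<in>{1..N}. complex_of_real (jac N \<alpha> v i j) * x j) = complex_of_real mu * x i" .
    qed
  qed
qed

end
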